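(* For the modified EnvZ/OmpR network described in the context and any positive rate constants $k_1,\dots,k_{16}$, put \[\gamma=\frac{k_{10}k_{12}}{k_{11}+k_{12}}\cdot\frac{k_3}{k_4+k_5}+\frac{k_{13}k_{15}}{k_{14}+k_{15}}\cdot\frac{k_2}{k_1}.\] Then for every choice of positive values of $[\mathrm{EnvZ}]$ and $[\mathrm{EnvZ\text{-}P}]$ there is exactly one positive steady state with these values, and at every positive steady state \[[\mathrm{OmpR\text{-}P}]=\frac{k_3k_5\,[\mathrm{EnvZ}]}{(k_4+k_5)(\gamma[\mathrm{EnvZ}]+k_{16})}.\] Consequently, the set of values of $[\mathrm{OmpR\text{-}P}]$ over all positive steady states is exactly the open interval $\bigl(0,\;k_3k_5/((k_4+k_5)\gamma)\bigr)$; in particular $[\mathrm{OmpR\text{-}P}]$ does not exhibit absolute concentration robustness (it takes different values at different positive steady states), and $k_3k_5/((k_4+k_5)\gamma)$ is the best possible upper bound.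
   Context: The modified EnvZ/OmpR network has mass-action kinetics and reactions $\mathrm{EnvZ\text{-}ADP}\underset{k_2}{\overset{k_1}{\rightleftharpoons}}\mathrm{EnvZ}\underset{k_4}{\overset{k_3}{\rightleftharpoons}}\mathrm{EnvZ\text{-}ATP}\xrightarrow{k_5}\mathrm{EnvZ\text{-}P}$; $\mathrm{EnvZ\text{-}P}+\mathrm{OmpR}\underset{k_7}{\overset{k_6}{\rightleftharpoons}}\mathrm{EnvZ\text{-}P\text{-}OmpR}\underset{k_9}{\overset{k_8}{\rightleftharpoons}}\mathrm{EnvZ}+\mathrm{OmpR\text{-}P}$; $\mathrm{EnvZ\text{-}ATP}+\mathrm{OmpR\text{-}P}\underset{k_{11}}{\overset{k_{10}}{\rightleftharpoons}}\mathrm{EnvZ\text{-}ATP\text{-}OmpR\text{-}P}\xrightarrow{k_{12}}\mathrm{EnvZ\text{-}ATP}+\mathrm{OmpR}$; $\mathrm{EnvZ\text{-}ADP}+\mathrm{OmpR\text{-}P}\underset{k_{14}}{\overset{k_{13}}{\rightleftharpoons}}\mathrm{EnvZ\text{-}ADP\text{-}OmpR\text{-}P}\xrightarrow{k_{15}}\mathrm{EnvZ\text{-}ADP}+\mathrm{OmpR}$; $\mathrm{OmpR\text{-}P}\xrightarrow{k_{16}}\mathrm{OmpR}$ (here $A\underset{k'}{\overset{k}{\rightleftharpoons}}B$ means $A\xrightarrow{k}B$ and $B\xrightarrow{k'}A$; hyphenated names are single species, nine species in total). Square brackets denote concentrations; a positive steady state is a vector of positive concentrations of all nine species at which all mass-action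 rates of change vanish. A species exhibits absolute concentration robustness if it takes the same value at every positive steady state. *)

theory Defs
  imports Complex_Main
begin

datatype species =
    EnvZ_ADP | EnvZ | EnvZ_ATP | EnvZ_P | OmpR | OmpR_P
  | EnvZ_P_OmpR | EnvZ_ATP_OmpR_P | EnvZ_ADP_OmpR_P

text \<open>Mass-action rate of change of each species; k i is rate constant k_i
  (indices 1..16), x s the concentration of species s.\<close>
fun dxdt :: "(nat \<Rightarrow> real) \<Rightarrow> (species \<Rightarrow> real) \<Rightarrow> species \<Rightarrow> real" where
  "dxdt k x EnvZ_ADP =
     - k 1 * x EnvZ_ADP + k 2 * x EnvZ
     - k 13 * x EnvZ_ADP * x OmpR_P + k 14 * x EnvZ_ADP_OmpR_P + k 15 * x EnvZ_ADP_OmpR_P"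
| "dxdt k x EnvZ =
     k 1 * x EnvZ_ADP - k 2 * x EnvZ - k 3 * x EnvZ + k 4 * x EnvZ_ATP
     + k 8 * x EnvZ_P_OmpR - k 9 * x EnvZ * x OmpR_P"
| "dxdt k x EnvZ_ATP =
     k 3 * x EnvZ - k 4 * x EnvZ_ATP - k 5 * x EnvZ_ATP
     - k 10 * x EnvZ_ATP * x OmpR_P + k 11 * x EnvZ_ATP_OmpR_P + k 12 * x EnvZ_ATP_OmpR_P"
| "dxdt k x EnvZ_P =
     k 5 * x EnvZ_ATP - k 6 * x EnvZ_P * x OmpR + k 7 * x EnvZ_P_OmpR"
| "dxdt k x OmpR =
     - k 6 * x EnvZ_P * x OmpR + k 7 * x EnvZ_P_OmpR + k 12 * x EnvZ_ATP_OmpR_P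
     + k 15 * x EnvZ_ADP_OmpR_P + k 16 * x OmpR_P"
| "dxdt k x OmpR_P =
     k 8 * x EnvZ_P_OmpR - k 9 * x EnvZ * x OmpR_P
     - k 10 * x EnvZ_ATP * x OmpR_P + k 11 * x EnvZ_ATP_OmpR_P
     - k 13 * x EnvZ_ADP * x OmpR_P + k 14 * x EnvZ_ADP_OmpR_P - k 16 * x OmpR_P"
| "dxdt k x EnvZ_P_OmpR =
     k 6 * x EnvZ_P * x OmpR - k 7 * x EnvZ_P_OmpR - k 8 * x EnvZ_P_OmpR
     + k 9 * x EnvZ * x OmpR_P"
| "dxdt k x EnvZ_ATP_OmpR_P =
     k 10 * x EnvZ_ATP * x OmpR_P - k 11 * x EnvZ_ATP_OmpR_P - k 12 * x EnvZ_ATP_OmpR_P"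
| "dxdt k x EnvZ_ADP_OmpR_P =
     k 13 * x EnvZ_ADP * x OmpR_P - k 14 * x EnvZ_ADP_OmpR_P - k 15 * x EnvZ_ADP_OmpR_P"

definition pos_steady_state :: "(nat \<Rightarrow> real) \<Rightarrow> (species \<Rightarrow> real) \<Rightarrow> bool" where
  "pos_steady_state k x \<longleftrightarrow> (\<forall>s. x s > 0) \<and> (\<forall>s. dxdt k x s = 0)"

definition has_ACR :: "(nat \<Rightarrow> real) \<Rightarrow> species \<Rightarrow> bool" where
  "has_ACR k s \<longleftrightarrow> (\<forall>x y. pos_steady_state k x \<and> pos_steady_state k y \<longrightarrow> x s = y s)"

definition gamma :: "(nat \<Rightarrow> real) \<Rightarrow> real" where
  "gamma k = k 10 * k 12 / (k 11 + k 12) * (k 3 / (k 4 + k 5))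
           + k 13 * k 15 / (k 14 + k 15) * (k 2 / k 1)"

end

theory Submission
  imports Defs
begin

definition solA where "solA k e = k 2 * e / k 1"
definition solT where "solT k e = k 3 * e / (k 4 + k 5)"
definition solQ where "solQ k e = k 3 * k 5 * e / ((k 4 + k 5) * (gamma k * e + k 16))"
definition solC2 where "solC2 k e = k 10 * solT k e * solQ k e / (k 11 + k 12)"
definition solC3 where "solC3 k e = k 13 * solA k e * solQ k e / (k 14 + k 15)"
definition solC1 where "solC1 k e = (k 5 * solT k e + k 9 * e * solQ k e) / k 8"
definition solR where "solR k e p = (k 5 * solT k e + k 7 * solC1 k e) / (k 6 * p)"

definition sol :: "(nat \<Rightarrow> real) \<Rightarrow> real \<Rightarrow> real \<Rightarrow> species \<Rightarrow> real" where
 "sol k e p s = (case s of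
    EnvZ_ADP \<Rightarrow> solA k e | EnvZ \<Rightarrow> e | EnvZ_ATP \<Rightarrow> solT k e | EnvZ_P \<Rightarrow> p
  | OmpR \<Rightarrow> solR k e p | OmpR_P \<Rightarrow> solQ k e | EnvZ_P_OmpR \<Rightarrow> solC1 k e
  | EnvZ_ATP_OmpR_P \<Rightarrow> solC2 k e | EnvZ_ADP_OmpR_P \<Rightarrow> solC3 k e)"

lemma kp:
  fixes k :: "nat \<Rightarrow> real"
  assumes "\<forall>i\<in>{1..16}. k i > 0"
  shows "k 1 > 0" "k 2 > 0" "k 3 > 0" "k 4 > 0" "k 5 > 0" "k 6 > 0" "k 7 > 0" "k 8 > 0"
    "k 9 > 0" "k 10 > 0" "k 11 > 0" "k 12 > 0" "k 13 > 0" "k 14 > 0" "k 15 > 0" "k 16 > 0"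
  using assms by auto

lemma gamma_pos: assumes "\<forall>i\<in>{1..16}. k i > 0" shows "gamma k > 0"
  using kp[OF assms] unfolding gamma_def
  by (intro add_pos_pos mult_pos_pos divide_pos_pos) auto

lemma key:
  assumes kpos: "\<forall>i\<in>{1..16}. k i > 0" and e: "e > 0"
  shows "k 12 * solC2 k e + k 15 * solC3 k e + k 16 * solQ k e = k 5 * solT k e"
proof -
  note k = kp[OF kpos]
  have g: "gamma k * e + k 16 > 0" using gamma_pos[OF kpos] e k by (simp add: add_pos_pos)
  have "k 12 * solC2 k e + k 15 * solC3 k e + k 16 * solQ k e = solQ k e * (gamma k * e + k 16)"
    using k unfolding solC2_def solC3_def solT_def solA_def gamma_def
    by (simp add: field_simps)
  also have "\<dots> = k 5 * solT k e"
  proof -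
    have "(k 4 + k 5) \<noteq> 0" "gamma k * e + k 16 \<noteq> 0" using g k by auto
    then show ?thesis unfolding solQ_def solT_def by (simp add: divide_simps del: distrib_left distrib_right)
  qed
  finally show ?thesis .
qed

lemma sol_ss:
  assumes kpos: "\<forall>i\<in>{1..16}. k i > 0" and e: "e > 0" and p: "p > 0"
  shows "pos_steady_state k (sol k e p)"
proof -
  note k = kp[OF kpos]
  have g: "gamma k * e + k 16 > 0" using gamma_pos[OF kpos] e k by (simp add: add_pos_pos)
  have A: "solA k e > 0" using k e unfolding solA_def by simp
  have T: "solT k e > 0" using k e unfolding solT_def by simp
  have Q: "solQ k e > 0" using k e g unfolding solQ_def by simp
  have C2: "solC2 k e > 0" using k T Q unfolding solC2_def by simp
  have C3: "solC3 k e > 0" using k A Q unfolding solC3_def by simp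
  have C1: "solC1 k e > 0" using k T Q e unfolding solC1_def by (simp add: add_pos_pos)
  have R: "solR k e p > 0" using k T C1 p unfolding solR_def by (simp add: add_pos_pos)
  note K = key[OF kpos e]
  have eA: "k 1 * solA k e = k 2 * e" using k unfolding solA_def by simp
  have eT: "(k 4 + k 5) * solT k e = k 3 * e" using k unfolding solT_def by simp
  have eC2: "(k 11 + k 12) * solC2 k e = k 10 * solT k e * solQ k e" using k unfolding solC2_def by simp
  have eC3: "(k 14 + k 15) * solC3 k e = k 13 * solA k e * solQ k e" using k unfolding solC3_def by simp
  have eC1: "k 8 * solC1 k e = k 5 * solT k e + k 9 * e * solQ k e" using k unfolding solC1_def by simp
  have eR: "k 6 * p * solR k e p = k 5 * solT k e + k 7 * solC1 k e" using k p unfolding solR_def by simp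
  show ?thesis unfolding pos_steady_state_def
  proof (intro conjI allI)
    fix s show "sol k e p s > 0" by (cases s) (auto simp: sol_def A T Q C1 C2 C3 R e p)
  next
    fix s show "dxdt k (sol k e p) s = 0"
      using eA eT eC2 eC3 eC1 eR K by (cases s) (simp_all add: sol_def algebra_simps)
  qed
qed

lemma ss_sol:
  assumes kpos: "\<forall>i\<in>{1..16}. k i > 0" and ss: "pos_steady_state k x"
  shows "x = sol k (x EnvZ) (x EnvZ_P)"
proof -
  note k = kp[OF kpos]
  have pos: "\<And>s. x s > 0" and d: "\<And>s. dxdt k x s = 0" using ss unfolding pos_steady_state_def by auto
  define A where "A = x EnvZ_ADP"
  define Z where "Z = x EnvZ"
  define T where "T = x EnvZ_ATP"
  define P where "P = x EnvZ_P"
  define R where "R = x OmpR"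
  define Q where "Q = x OmpR_P"
  define C1 where "C1 = x EnvZ_P_OmpR"
  define C2 where "C2 = x EnvZ_ATP_OmpR_P"
  define C3 where "C3 = x EnvZ_ADP_OmpR_P"
  note defs = A_def Z_def T_def P_def R_def Q_def C1_def C2_def C3_def
  have dA: "- k 1 * A + k 2 * Z - k 13 * A * Q + k 14 * C3 + k 15 * C3 = 0" using d[of EnvZ_ADP] by (simp add: defs)
  have dT: "k 3 * Z - k 4 * T - k 5 * T - k 10 * T * Q + k 11 * C2 + k 12 * C2 = 0" using d[of EnvZ_ATP] by (simp add: defs)
  have dP: "k 5 * T - k 6 * P * R + k 7 * C1 = 0" using d[of EnvZ_P] by (simp add: defs)
  have dQ: "k 8 * C1 - k 9 * Z * Q - k 10 * T * Q + k 11 * C2 - k 13 * A * Q + k 14 * C3 - k 16 * Q = 0" using d[of OmpR_P] by (simp add: defs)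
  have dC1: "k 6 * P * R - k 7 * C1 - k 8 * C1 + k 9 * Z * Q = 0" using d[of EnvZ_P_OmpR] by (simp add: defs)
  have dC2: "k 10 * T * Q - k 11 * C2 - k 12 * C2 = 0" using d[of EnvZ_ATP_OmpR_P] by (simp add: defs)
  have dC3: "k 13 * A * Q - k 14 * C3 - k 15 * C3 = 0" using d[of EnvZ_ADP_OmpR_P] by (simp add: defs)
  have Zp: "Z > 0" "P > 0" using pos by (auto simp: defs)
  have eA: "A = solA k Z" using dA dC3 k unfolding solA_def by (simp add: field_simps)
  have eT: "T = solT k Z" using dT dC2 k unfolding solT_def by (simp add: field_simps)
  have eC2: "C2 = k 10 * T * Q / (k 11 + k 12)" using dC2 k by (simp add: field_simps)
  have eC3: "C3 = k 13 * A * Q / (k 14 + k 15)" using dC3 k by (simp add: field_simps)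
  have kk: "k 12 * C2 + k 15 * C3 + k 16 * Q = k 5 * T" using dP dQ dC1 dC2 dC3 by (simp add: algebra_simps)
  have g: "gamma k * Z + k 16 > 0" using gamma_pos[OF kpos] Zp k by (simp add: add_pos_pos)
  have "Q * (gamma k * Z + k 16) = k 5 * T"
    using kk k unfolding eC2 eC3 eA eT solA_def solT_def gamma_def by (simp add: field_simps)
  hence eQ: "Q = solQ k Z"
  proof -
    assume h: "Q * (gamma k * Z + k 16) = k 5 * T"
    have "Q = k 5 * T / (gamma k * Z + k 16)" using h g by (simp add: field_simps)
    also have "\<dots> = solQ k Z" unfolding solQ_def eT solT_def by simp
    finally show ?thesis .
  qed
  have eC1: "C1 = solC1 k Z" using dP dC1 k unfolding solC1_def eT[symmetric] eQ[symmetric] by (simp add: field_simps)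
  have eR: "R = solR k Z P" using dP Zp k unfolding solR_def eT[symmetric] eC1[symmetric] by (simp add: field_simps)
  have eC2': "C2 = solC2 k Z" using eC2 unfolding solC2_def eT eQ .
  have eC3': "C3 = solC3 k Z" using eC3 unfolding solC3_def eA eQ .
  show ?thesis
  proof
    fix s show "x s = sol k (x EnvZ) (x EnvZ_P) s"
      using eA eT eQ eC1 eR eC2' eC3' by (cases s) (simp_all add: sol_def defs)
  qed
qed

lemma solQ_alt: assumes kpos: "\<forall>i\<in>{1..16}. k i > 0"
  shows "solQ k e = (k 3 * k 5 / (k 4 + k 5)) * e / (gamma k * e + k 16)"
  unfolding solQ_def by simp

lemma solQ_range: assumes kpos: "\<forall>i\<in>{1..16}. k i > 0" and e: "e > 0"
  shows "0 < solQ k e \<and> solQ k e < k 3 * k 5 / ((k 4 + k 5) * gamma k)"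
proof -
  note k = kp[OF kpos]
  define c where "c = k 3 * k 5 / (k 4 + k 5)"
  define g where "g = gamma k"
  have c: "c > 0" using k unfolding c_def by simp
  have g: "g > 0" using gamma_pos[OF kpos] unfolding g_def .
  have M: "k 3 * k 5 / ((k 4 + k 5) * gamma k) = c / g" unfolding c_def g_def by simp
  have Q: "solQ k e = c * e / (g * e + k 16)" unfolding solQ_alt[OF kpos] c_def g_def ..
  have d: "g * e + k 16 > 0" using g e k by (simp add: add_pos_pos)
  have "c * e / (g * e + k 16) < c / g"
    using c g d e k by (simp add: divide_simps algebra_simps)
  moreover have "c * e / (g * e + k 16) > 0" using c e d by simp
  ultimately show ?thesis unfolding M Q by simp
qed

lemma solQ_onto: assumes kpos: "\<forall>i\<in>{1..16}. k i > 0"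
  and q: "0 < q" "q < k 3 * k 5 / ((k 4 + k 5) * gamma k)"
  shows "\<exists>e>0. solQ k e = q"
proof -
  note k = kp[OF kpos]
  define c where "c = k 3 * k 5 / (k 4 + k 5)"
  define g where "g = gamma k"
  have c: "c > 0" using k unfolding c_def by simp
  have g: "g > 0" using gamma_pos[OF kpos] unfolding g_def .
  have M: "k 3 * k 5 / ((k 4 + k 5) * gamma k) = c / g" unfolding c_def g_def by simp
  have cq: "c - g * q > 0" using q g unfolding M by (simp add: field_simps)
  define e where "e = k 16 * q / (c - g * q)"
  have e: "e > 0" using cq q k unfolding e_def by simp
  have d: "g * e + k 16 = k 16 * c / (c - g * q)" using cq unfolding e_def by (simp add: field_simps)
  have "solQ k e = c * e / (g * e + k 16)" unfolding solQ_alt[OF kpos] c_def g_def ..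
  also have "\<dots> = q" unfolding d unfolding e_def using cq c k by (simp add: field_simps)
  finally show ?thesis using e by blast
qed

lemma sol_vals: "sol k e p EnvZ = e" "sol k e p EnvZ_P = p" "sol k e p OmpR_P = solQ k e"
  by (simp_all add: sol_def)

theorem mainTheorem10:
  fixes k :: "nat \<Rightarrow> real"
  assumes kpos: "\<forall>i\<in>{1..16}. k i > 0"
  shows "(\<forall>e p. e > 0 \<and> p > 0 \<longrightarrow>
            (\<exists>!x. pos_steady_state k x \<and> x EnvZ = e \<and> x EnvZ_P = p))
       \<and> (\<forall>x. pos_steady_state k x \<longrightarrow>
            x OmpR_P = k 3 * k 5 * x EnvZ / ((k 4 + k 5) * (gamma k * x EnvZ + k 16)))
       \<and> {x OmpR_P | x. pos_steady_state k x} = {0 <..< k 3 * k 5 / ((k 4 + k 5) * gamma k)}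
       \<and> \<not> has_ACR k OmpR_P
       \<and> (\<forall>x. pos_steady_state k x \<longrightarrow> x OmpR_P < k 3 * k 5 / ((k 4 + k 5) * gamma k))
       \<and> (\<forall>b. b < k 3 * k 5 / ((k 4 + k 5) * gamma k) \<longrightarrow>
            (\<exists>x. pos_steady_state k x \<and> x OmpR_P > b))"
proof -
  define M where "M = k 3 * k 5 / ((k 4 + k 5) * gamma k)"
  note k = kp[OF kpos]
  have Mpos: "M > 0" unfolding M_def using k gamma_pos[OF kpos] by simp
  have xQ: "\<And>x. pos_steady_state k x \<Longrightarrow> x OmpR_P = solQ k (x EnvZ)"
    by (metis kpos ss_sol sol_vals(3))
  have xZ: "\<And>x. pos_steady_state k x \<Longrightarrow> x EnvZ > 0"
    unfolding pos_steady_state_def by auto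
  have P1: "\<forall>e p. e > 0 \<and> p > 0 \<longrightarrow>
            (\<exists>!x. pos_steady_state k x \<and> x EnvZ = e \<and> x EnvZ_P = p)"
  proof (intro allI impI)
    fix e p :: real assume "e > 0 \<and> p > 0"
    then have ep: "e > 0" "p > 0" by auto
    show "\<exists>!x. pos_steady_state k x \<and> x EnvZ = e \<and> x EnvZ_P = p"
    proof (rule ex1I[of _ "sol k e p"])
      show "pos_steady_state k (sol k e p) \<and> sol k e p EnvZ = e \<and> sol k e p EnvZ_P = p"
        using sol_ss[OF kpos ep] sol_vals by simp
    next
      fix x assume "pos_steady_state k x \<and> x EnvZ = e \<and> x EnvZ_P = p"
      then show "x = sol k e p" using ss_sol[OF kpos] by metis
    qed
  qed
  have P2: "\<forall>x. pos_steady_state k x \<longrightarrow>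
            x OmpR_P = k 3 * k 5 * x EnvZ / ((k 4 + k 5) * (gamma k * x EnvZ + k 16))"
    using xQ unfolding solQ_def by simp
  have P3: "{x OmpR_P | x. pos_steady_state k x} = {0 <..< M}"
  proof (intro equalityI subsetI)
    fix q assume "q \<in> {x OmpR_P | x. pos_steady_state k x}"
    then obtain x where "pos_steady_state k x" "q = x OmpR_P" by auto
    then have "q = solQ k (x EnvZ)" "x EnvZ > 0" using xQ xZ by auto
    then show "q \<in> {0<..<M}" using solQ_range[OF kpos, of "x EnvZ"] unfolding M_def by auto
  next
    fix q assume "q \<in> {0<..<M}"
    then obtain e where e: "e > 0" "solQ k e = q" using solQ_onto[OF kpos] unfolding M_def by auto
    have "pos_steady_state k (sol k e 1)" using sol_ss[OF kpos e(1)] by simp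
    then show "q \<in> {x OmpR_P | x. pos_steady_state k x}" proof -
      have "q = sol k e 1 OmpR_P" using e sol_vals(3) by simp
      then show ?thesis using \<open>pos_steady_state k (sol k e 1)\<close> by blast
    qed
  qed
  have inI: "\<And>q. 0 < q \<Longrightarrow> q < M \<Longrightarrow> \<exists>x. pos_steady_state k x \<and> x OmpR_P = q"
  proof -
    fix q :: real assume "0 < q" "q < M"
    then have "q \<in> {x OmpR_P | x. pos_steady_state k x}" unfolding P3 by simp
    then show "\<exists>x. pos_steady_state k x \<and> x OmpR_P = q" by auto
  qed
  have P4: "\<not> has_ACR k OmpR_P"
  proof
    assume h: "has_ACR k OmpR_P"
    obtain x where x: "pos_steady_state k x" "x OmpR_P = M/2" using inI[of "M/2"] Mpos by auto
    obtain y where y: "pos_steady_state k y" "y OmpR_P = M/3" using inI[of "M/3"] Mpos by auto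
    have "x OmpR_P = y OmpR_P" using h x(1) y(1) unfolding has_ACR_def by blast
    then show False using x(2) y(2) Mpos by simp
  qed
  have P5: "\<forall>x. pos_steady_state k x \<longrightarrow> x OmpR_P < M" using P3 by auto
  have P6: "\<forall>b. b < M \<longrightarrow> (\<exists>x. pos_steady_state k x \<and> x OmpR_P > b)"
  proof (intro allI impI)
    fix b assume b: "b < M"
    define q where "q = (max b 0 + M) / 2"
    have "0 < q" "q < M" "b < q" using b Mpos unfolding q_def by (auto simp: max_def)
    then show "\<exists>x. pos_steady_state k x \<and> x OmpR_P > b" using inI by metis
  qed
  show ?thesis using P1 P2 P3 P4 P5 P6 unfolding M_def by blast
qed

end
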